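(* Let $l,m,n$ be positive integers with $l > m\geq n\geq \frac{l}{2}$, and let $c_1,c_2\in\mathbb{Q}$ be constants. For $0\le k\le m$ and $r\in\{1,2\}$ write $$U_k^{(r)}:=c_1\bigl(H_{k+n}^{(r)} - H_{k+l-n-1}^{(r)}\bigr) + c_2 \bigl(H_{k+m}^{(r)} - H_{k+l-m-1}^{(r)}\bigr).$$ Then \begin{multline*} \sum_{k=0}^{n} \binom{m+k}{k} \binom{m}{k} \binom{n+k}{k} \binom{n}{k} \Bigl\{ \Bigl[1+k \bigl(H_{m+k}^{(1)} +H_{m-k}^{(1)} + H_{n+k}^{(1)} + H_{n-k}^{(1)} -4H_k^{(1)} \bigr)\Bigr] U_k^{(1)} - k\, U_k^{(2)} \Bigr\}\\ + \sum_{k=n+1}^{m} (-1)^{k-n} \binom{m+k}{k} \binom{m}{k} \binom{n+k}{k} \Big/ \binom{k-1}{n}\; U_k^{(1)} = 0. \end{multline*}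
   Context: For non-negative integers $i$ and $n$, the generalized harmonic sum is $H^{(i)}_{n}:=\sum_{j=1}^{n} j^{-i}$ for $n\ge 1$, and $H^{(i)}_{0}:=0$. An empty sum (e.g. the second sum when $m=n$) equals $0$. *)

theory Defs
  imports Complex_Main
begin

definition gharm :: "nat \<Rightarrow> nat \<Rightarrow> rat" where
  "gharm i n = (\<Sum>j = 1..n. 1 / (of_nat j) ^ i)"

definition Uk :: "rat \<Rightarrow> rat \<Rightarrow> nat \<Rightarrow> nat \<Rightarrow> nat \<Rightarrow> nat \<Rightarrow> nat \<Rightarrow> rat" where
  "Uk c1 c2 l m n r k =
     c1 * (gharm r (k + n) - gharm r (k + l - n - 1))
   + c2 * (gharm r (k + m) - gharm r (k + l - m - 1))"

end

theory Submission
  imports Defs "HOL-Complex_Analysis.Complex_Analysis"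
begin


lemma rat_bound_aux:
  fixes R :: real assumes "R \<ge> 1" "p + 2 \<le> q"
  shows "(2*R)^p / (R/2)^q \<le> 2^(p+q) / R^2"
proof -
  have Rq: "R^q = R^p * R^(q-p)" using assms(2) by (simp add: power_add[symmetric])
  have "R^2 \<le> R^(q-p)" using assms by (intro power_increasing) auto
  hence "R^p * R^2 \<le> R^q" unfolding Rq using assms by (intro mult_left_mono) auto
  moreover have "(2*R)^p / (R/2)^q = 2^(p+q) * R^p / R^q"
    by (simp add: power_mult_distrib power_divide power_add field_simps)
  ultimately show ?thesis using assms
    by (simp add: divide_simps) (smt (verit) mult_left_mono mult.commute mult.assoc zero_le_power)
qed

lemma residue_sum_zero:
  fixes a :: "'i \<Rightarrow> complex" and b :: "'j \<Rightarrow> complex"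
  assumes fin: "finite I" "finite J" and cardIJ: "card I + 2 \<le> card J"
  defines "f \<equiv> \<lambda>t. (\<Prod>i\<in>I. (t - a i)) / (\<Prod>i\<in>J. (t - b i))"
  shows "(\<Sum>p\<in>b`J. residue f p) = 0"
proof -
  define S where "S = (\<Sum>p\<in>b`J. residue f p)"
  define M where "M = 1 + (\<Sum>i\<in>I. norm (a i)) + (\<Sum>i\<in>J. norm (b i))"
  have M1: "M \<ge> 1" unfolding M_def by (auto intro!: sum_nonneg add_nonneg_nonneg)
  have aM: "norm (a i) \<le> M" if "i \<in> I" for i
  proof -
    have "norm (a i) \<le> (\<Sum>i\<in>I. norm (a i))" using fin that by (intro member_le_sum) auto
    moreover have "0 \<le> (\<Sum>i\<in>J. norm (b i))" by (intro sum_nonneg) auto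
    ultimately show ?thesis unfolding M_def by linarith
  qed
  have bM: "norm (b i) \<le> M" if "i \<in> J" for i
  proof -
    have "norm (b i) \<le> (\<Sum>i\<in>J. norm (b i))" using fin that by (intro member_le_sum) auto
    moreover have "0 \<le> (\<Sum>i\<in>I. norm (a i))" by (intro sum_nonneg) auto
    ultimately show ?thesis unfolding M_def by linarith
  qed
  define C where "C = (2::real)^(card I + card J)"
  have key: "norm S \<le> C / R" if R: "R \<ge> 2*M" for R
  proof -
    have R1: "R \<ge> 1" "R > 0" using M1 R by auto
    have holo: "f holomorphic_on UNIV - b`J"
      unfolding f_def by (intro holomorphic_intros) (auto simp: prod_zero_iff fin)
    have "contour_integral (circlepath 0 R) f
          = 2 * pi * \<i> * (\<Sum>p\<in>b`J. winding_number (circlepath 0 R) p * residue f p)"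
    proof (rule Residue_theorem[OF _ _ _ holo])
      show "path_image (circlepath 0 R) \<subseteq> UNIV - b ` J"
        using R1 bM M1 R by (force simp: path_image_circlepath)
    qed (use fin R1 in auto)
    also have "\<dots> = 2 * pi * \<i> * S" unfolding S_def
      using bM M1 R by (intro arg_cong[where f="\<lambda>x. 2 * pi * \<i> * x"] sum.cong refl)
         (subst winding_number_circlepath; force)
    finally have ci: "contour_integral (circlepath 0 R) f = 2 * pi * \<i> * S" .
    have "f contour_integrable_on circlepath 0 R"
      apply (rule contour_integrable_continuous_circlepath)
      apply (rule holomorphic_on_imp_continuous_on)
      apply (rule holomorphic_on_subset[OF holo])
      using R1 bM M1 R by (force simp: path_image_circlepath)
    hence hc: "(f has_contour_integral 2 * pi * \<i> * S) (circlepath 0 R)"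
      using ci has_contour_integral_integral by fastforce
    have bnd: "norm (f x) \<le> C / R^2" if "norm (x - 0) = R" for x
    proof -
      have xR: "norm x = R" using that by simp
      have n1: "norm (\<Prod>i\<in>I. (x - a i)) \<le> (2*R)^card I"
      proof -
        have "norm (\<Prod>i\<in>I. (x - a i)) \<le> (\<Prod>i\<in>I. norm (x - a i))" by (rule norm_prod_le)
        also have "\<dots> \<le> (\<Prod>i\<in>I. 2*R)"
        proof (rule prod_mono)
          fix i assume "i \<in> I"
          hence "norm (x - a i) \<le> norm x + norm (a i)" "norm (a i) \<le> M" using aM norm_triangle_ineq4 by auto
          thus "0 \<le> norm (x - a i) \<and> norm (x - a i) \<le> 2 * R" using xR R M1 by auto
        qed
        finally show ?thesis by simp
      qed
      have n2: "norm (\<Prod>i\<in>J. (x - b i)) \<ge> (R/2)^card J"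
      proof -
        have "(\<Prod>i\<in>J. R/2) \<le> (\<Prod>i\<in>J. norm (x - b i))"
        proof (rule prod_mono)
          fix i assume "i \<in> J"
          hence "norm x - norm (b i) \<le> norm (x - b i)" "norm (b i) \<le> M" using bM norm_triangle_ineq2 by auto
          thus "0 \<le> R/2 \<and> R/2 \<le> norm (x - b i)" using xR R M1 by auto
        qed
        thus ?thesis by (simp add: prod_norm)
      qed
      have "norm (f x) = norm (\<Prod>i\<in>I. (x - a i)) / norm (\<Prod>i\<in>J. (x - b i))"
        unfolding f_def by (simp add: norm_divide)
      also have "\<dots> \<le> (2*R)^card I / (R/2)^card J"
        using n1 n2 R1 by (intro frac_le) auto
      also have "\<dots> \<le> C / R^2" unfolding C_def using rat_bound_aux[OF R1(1) cardIJ] .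
      finally show ?thesis .
    qed
    have "norm (2 * pi * \<i> * S) \<le> C / R^2 * (2*pi*R)"
      using has_contour_integral_bound_circlepath[OF hc _ R1(2) bnd] unfolding C_def by auto
    hence "2*pi*norm S \<le> 2*pi*(C/R)" using R1
      by (simp add: norm_mult power2_eq_square field_simps)
    hence "(2*pi)*norm S \<le> (2*pi)*(C/R)" by simp
    thus ?thesis by (rule mult_left_le_imp_le) simp
  qed
  show ?thesis
  proof (rule ccontr)
    assume "(\<Sum>p\<in>b`J. residue f p) \<noteq> 0"
    hence Sp: "norm S > 0" unfolding S_def by simp
    have Cp: "C > 0" unfolding C_def by simp
    define R where "R = max (2*M) (2*C/norm S)"
    have "norm S \<le> C / R" by (rule key) (simp add: R_def)
    moreover have "C / R \<le> norm S / 2"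
    proof -
      have "R \<ge> 2*C/norm S" "R > 0" using M1 unfolding R_def by auto
      hence "R * norm S \<ge> 2*C" using Sp by (simp add: divide_simps)
      thus ?thesis using Sp Cp \<open>R > 0\<close> by (simp add: divide_simps mult.commute)
    qed
    ultimately show False using Sp by linarith
  qed
qed


definition hs :: "nat \<Rightarrow> 'a::field_char_0" where
  "hs n = (\<Sum>i=1..n. 1 / of_nat i)"

lemma hs_Suc: "hs (Suc n) = hs n + 1 / of_nat (Suc n)"
  by (simp add: hs_def)

lemma inv_sub_swap: "1/(x-y) = -(1/(y - x::'a::field))"
  by (metis minus_diff_eq divide_minus_right)

lemma P1: "(\<Prod>i\<in>{1..m}. (of_nat k + of_nat i :: 'a::field_char_0)) = fact (m+k) / fact k"
proof (induction m)
  case 0 then show ?case by simp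
next
  case (Suc m)
  have "{1..Suc m} = insert (Suc m) {1..m}" by auto
  hence "(\<Prod>i\<in>{1..Suc m}. (of_nat k + of_nat i :: 'a)) = (of_nat k + of_nat (Suc m)) * (\<Prod>i\<in>{1..m}. (of_nat k + of_nat i))"
    by simp
  also have "\<dots> = (of_nat (Suc (m + k))) * (fact (m+k) / fact k)" using Suc by (simp add: add_ac)
  also have "\<dots> = fact (Suc m + k) / fact k" by (simp only: fact_Suc add_Suc) simp
  finally show ?case .
qed

lemma S1: "(\<Sum>i\<in>{1..m}. 1 / (of_nat k + of_nat i :: 'a::field_char_0)) = hs (m+k) - hs k"
proof (induction m)
  case 0 then show ?case by simp
next
  case (Suc m)
  have "{1..Suc m} = insert (Suc m) {1..m}" by auto
  thus ?case using Suc by (simp add: hs_Suc add_ac)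
qed

lemma P2a: "(\<Prod>i<k. (of_nat k - of_nat i :: 'a::field_char_0)) = fact k"
proof -
  have "(\<Prod>i<k. (of_nat k - of_nat i :: 'a)) = (\<Prod>i<k. of_nat (k - i))"
    by (intro prod.cong) (auto simp: of_nat_diff)
  also have "\<dots> = of_nat (\<Prod>i<k. k - i)" by simp
  also have "\<dots> = fact k" by (simp add: fact_prod_rev atLeast0LessThan)
  finally show ?thesis .
qed

lemma S2a: "(\<Sum>i<k. 1 / (of_nat k - of_nat i :: 'a::field_char_0)) = hs k"
proof -
  have "(\<Sum>i<k. 1 / (of_nat k - of_nat i :: 'a)) = (\<Sum>i<k. 1 / of_nat (k - i))"
    by (intro sum.cong) (auto simp: of_nat_diff)
  also have "\<dots> = (\<Sum>i=1..k. 1 / of_nat i)"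
  proof (rule sum.reindex_bij_witness[where i="\<lambda>i. k - i" and j="\<lambda>i. k - i"])
  qed auto
  finally show ?thesis by (simp add: hs_def)
qed

lemma P2: assumes "k \<le> m"
  shows "(\<Prod>i\<in>{0..m}-{k}. (of_nat k - of_nat i :: 'a::field_char_0)) = (-1)^(m-k) * fact k * fact (m-k)"
  using assms
proof (induction m rule: dec_induct)
  case base
  have "{0..k}-{k} = {..<k}" by auto
  thus ?case by (simp add: P2a)
next
  case (step m)
  have e: "{0..Suc m}-{k} = insert (Suc m) ({0..m}-{k})" using step by auto
  have "Suc m - k = Suc (m - k)" using step by simp
  thus ?case unfolding e using step
    by (simp add: of_nat_diff algebra_simps)
qed

lemma S2: assumes "k \<le> m"
  shows "(\<Sum>i\<in>{0..m}-{k}. 1 / (of_nat k - of_nat i :: 'a::field_char_0)) = hs k - hs (m-k)"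
  using assms
proof (induction m rule: dec_induct)
  case base
  have "{0..k}-{k} = {..<k}" by auto
  thus ?case by (simp add: S2a hs_def)
next
  case (step m)
  have e: "{0..Suc m}-{k} = insert (Suc m) ({0..m}-{k})" using step by auto
  have "Suc m - k = Suc (m - k)" using step by simp
  moreover have "1/(of_nat k - of_nat (Suc m)) = - (1 / of_nat (Suc (m-k)) :: 'a)"
    using step by (subst inv_sub_swap) (simp add: of_nat_diff)
  ultimately show ?case unfolding e using step
    by (simp add: hs_Suc)
qed

lemma P3: assumes "n < k"
  shows "(\<Prod>i\<in>{0..n}. (of_nat k - of_nat i :: 'a::field_char_0)) = fact k / fact (k - n - 1)"
  using assms
proof (induction n)
  case 0 then show ?case by (cases k) auto
next
  case (Suc n)
  have e: "{0..Suc n} = insert (Suc n) {0..n}" by auto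
  obtain d where d: "k - Suc n = Suc d" using Suc by (metis Suc_diff_Suc less_imp_Suc_add zero_less_diff Suc_lessD)
  hence dd: "k - n - 1 = Suc d" "k - Suc n - 1 = d" by auto
  have "fact (k - n - 1) = (of_nat (k - Suc n) :: 'a) * fact (k - Suc n - 1)"
    unfolding dd d by simp
  have nz: "(of_nat (k - Suc n) :: 'a) \<noteq> 0" using Suc by (simp del: of_nat_diff)
  have "(\<Prod>i\<in>{0..Suc n}. (of_nat k - of_nat i :: 'a)) = of_nat (k - Suc n) * (\<Prod>i\<in>{0..n}. (of_nat k - of_nat i :: 'a))"
    unfolding e using Suc by (simp add: of_nat_diff)
  also have "\<dots> = of_nat (k - Suc n) * (fact k / fact (k - n - 1))" using Suc by simp
  also have "\<dots> = of_nat (k - Suc n) * fact k / (of_nat (k - Suc n) * fact (k - Suc n - 1))"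
    using \<open>fact (k - n - 1) = _\<close> by simp
  also have "\<dots> = fact k / fact (k - Suc n - 1)" by (rule nonzero_mult_divide_mult_cancel_left[OF nz])
  finally show ?case .
qed
lemma nzkj: assumes "1 \<le> j" shows "(of_nat k + of_nat j :: 'a::field_char_0) \<noteq> 0"
proof -
  have "(of_nat (k + j) :: 'a) \<noteq> 0" using assms by (simp only: of_nat_eq_0_iff)
  thus ?thesis by simp
qed

lemma sign_aux: "k \<le> n \<Longrightarrow> n \<le> m \<Longrightarrow> ((-1::'a::field_char_0)^(m-k) * (-1)^(n-k)) = (-1)^(m+n)"
proof -
  assume a: "k \<le> n" "n \<le> m"
  have e: "m + n = (m - k) + (n - k) + 2*k" using a by simp
  have "(-1::'a)^(m+n) = (-1)^(m-k) * (-1)^(n-k) * ((-1)^2)^k"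
    unfolding e power_add power_mult by simp
  thus ?thesis by simp
qed


lemma ld_mult:
  assumes "(f has_field_derivative f z * a) (at z)" "(g has_field_derivative g z * b) (at z)"
  shows "((\<lambda>t. f t * g t) has_field_derivative (f z * g z) * (a + b)) (at z)"
  using DERIV_mult[OF assms] by (simp add: algebra_simps)

lemma ld_div:
  fixes f g :: "complex \<Rightarrow> complex"
  assumes "(f has_field_derivative f z * a) (at z)" "(g has_field_derivative g z * b) (at z)" "g z \<noteq> 0"
  shows "((\<lambda>t. f t / g t) has_field_derivative (f z / g z) * (a - b)) (at z)"
proof -
  have "((\<lambda>t. f t / g t) has_field_derivative (f z * a * g z - f z * (g z * b)) / (g z * g z)) (at z)"
    by (rule DERIV_divide[OF assms])
  moreover have "(f z * a * g z - f z * (g z * b)) / (g z * g z) = (f z / g z) * (a - b)"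
    using assms(3) by (simp add: field_simps)
  ultimately show ?thesis by simp
qed

lemma ld_prod_plus:
  fixes A :: "nat set" and z :: complex
  assumes "finite A" "\<And>i. i \<in> A \<Longrightarrow> z + of_nat i \<noteq> 0"
  shows "((\<lambda>t. \<Prod>i\<in>A. (t + of_nat i)) has_field_derivative (\<Prod>i\<in>A. (z + of_nat i)) * (\<Sum>i\<in>A. 1 / (z + of_nat i))) (at z)"
proof -
  have "\<And>x. x \<in> A \<Longrightarrow> ((\<lambda>t. t + of_nat x) has_field_derivative 1) (at z)"
    by (auto intro!: derivative_eq_intros)
  from has_field_derivative_prod'[of A "\<lambda>i t. t + of_nat i" z "\<lambda>_. 1", OF _ this] assms
  show ?thesis by auto
qed

lemma ld_prod_minus:
  fixes A :: "nat set" and z :: complex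
  assumes "finite A" "\<And>i. i \<in> A \<Longrightarrow> z - of_nat i \<noteq> 0"
  shows "((\<lambda>t. \<Prod>i\<in>A. (t - of_nat i)) has_field_derivative (\<Prod>i\<in>A. (z - of_nat i)) * (\<Sum>i\<in>A. 1 / (z - of_nat i))) (at z)"
proof -
  have "\<And>x. x \<in> A \<Longrightarrow> ((\<lambda>t. t - of_nat x) has_field_derivative 1) (at z)"
    by (auto intro!: derivative_eq_intros)
  from has_field_derivative_prod'[of A "\<lambda>i t. t - of_nat i" z "\<lambda>_. 1", OF _ this] assms
  show ?thesis by auto
qed

definition PN :: "nat \<Rightarrow> nat \<Rightarrow> nat \<Rightarrow> complex \<Rightarrow> complex" where
  "PN m n j t = (\<Prod>i\<in>{1..m}-{j}. (t + of_nat i)) * (\<Prod>i\<in>{1..n}. (t + of_nat i))"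

definition FF :: "nat \<Rightarrow> nat \<Rightarrow> nat \<Rightarrow> complex \<Rightarrow> complex" where
  "FF m n j t = t * PN m n j t / ((\<Prod>i\<in>{0..m}. (t - of_nat i)) * (\<Prod>i\<in>{0..n}. (t - of_nat i)))"

lemma FF_sum_res:
  assumes "1 \<le> j" "j \<le> m" "n \<le> m"
  shows "(\<Sum>k=0..m. residue (FF m n j) (of_nat k)) = 0"
proof -
  define I where "I = ({0..m}-{j}) <+> {1..n}"
  define J where "J = {0..m} <+> {0..n}"
  define a :: "nat + nat \<Rightarrow> complex" where "a = case_sum (\<lambda>i. - of_nat i) (\<lambda>i. - of_nat i)"
  define b :: "nat + nat \<Rightarrow> complex" where "b = case_sum of_nat of_nat"
  have fin: "finite I" "finite J" unfolding I_def J_def by auto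
  have cI: "card I = m + n" unfolding I_def using assms by (simp add: card_Plus)
  have cJ: "card J = m + n + 2" unfolding J_def by (simp add: card_Plus)
  have e0: "{0..m}-{j} = insert 0 ({1..m}-{j})" using assms by auto
  have eq: "FF m n j = (\<lambda>t. (\<Prod>i\<in>I. (t - a i)) / (\<Prod>i\<in>J. (t - b i)))"
  proof
    fix t
    show "FF m n j t = (\<Prod>i\<in>I. (t - a i)) / (\<Prod>i\<in>J. (t - b i))"
      unfolding FF_def PN_def I_def J_def a_def b_def
      by (simp add: prod.Plus e0 o_def mult.assoc)
  qed
  have "(\<Sum>p\<in>b`J. residue (FF m n j) p) = 0"
    unfolding eq by (rule residue_sum_zero) (use fin cI cJ in auto)
  moreover have "b`J = of_nat ` {0..m}"
  proof -
    have "b`J = of_nat`{0..m} \<union> of_nat`{0..n}" unfolding b_def J_def Plus_def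
      by (simp add: image_Un image_image)
    also have "\<dots> = of_nat`{0..m}" using assms by auto
    finally show ?thesis .
  qed
  moreover have "inj_on (of_nat :: nat \<Rightarrow> complex) {0..m}" by (auto simp: inj_on_def)
  ultimately show ?thesis by (simp add: sum.reindex)
qed

lemma res_low_raw:
  assumes "k \<le> n" "n \<le> m" "1 \<le> j" "j \<le> m"
  defines "Psi \<equiv> \<lambda>t. PN m n j t / ((\<Prod>i\<in>{0..m}-{k}. (t - of_nat i)) * (\<Prod>i\<in>{0..n}-{k}. (t - of_nat i)))"
  defines "z \<equiv> (of_nat k :: complex)"
  shows "residue (FF m n j) z = Psi z * (1 + z * (
      ((\<Sum>i\<in>{1..m}-{j}. 1/(z + of_nat i)) + (\<Sum>i\<in>{1..n}. 1/(z + of_nat i)))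
    - ((\<Sum>i\<in>{0..m}-{k}. 1/(z - of_nat i)) + (\<Sum>i\<in>{0..n}-{k}. 1/(z - of_nat i)))))"
proof -
  have km: "k \<in> {0..m}" "k \<in> {0..n}" using assms by auto
  have FFeq: "FF m n j = (\<lambda>t. (t * Psi t) / (t - z) ^ Suc 1)"
  proof
    fix t
    have "(\<Prod>i\<in>{0..m}. (t - of_nat i)) = (t - z) * (\<Prod>i\<in>{0..m}-{k}. (t - of_nat i))"
      using prod.remove[OF _ km(1), of "\<lambda>i. t - of_nat i"] unfolding z_def by simp
    moreover have "(\<Prod>i\<in>{0..n}. (t - of_nat i)) = (t - z) * (\<Prod>i\<in>{0..n}-{k}. (t - of_nat i))"
      using prod.remove[OF _ km(2), of "\<lambda>i. t - of_nat i"] unfolding z_def by simp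
    ultimately show "FF m n j t = (t * Psi t) / (t - z) ^ Suc 1"
      unfolding FF_def Psi_def by (simp add: power2_eq_square mult_ac)
  qed
  define A where "A = UNIV - (of_nat ` ({0..m}-{k}) :: complex set)"
  have oA: "open A" unfolding A_def by (intro open_Diff finite_imp_closed) auto
  have zA: "z \<in> A" unfolding A_def z_def by (auto simp: inj_on_def)
  have nzm: "(\<Prod>i\<in>{0..m}-{k}. (t - of_nat i)) \<noteq> 0" if "t \<in> A" for t
    using that unfolding A_def by auto
  have nzn: "(\<Prod>i\<in>{0..n}-{k}. (t - of_nat i)) \<noteq> 0" if "t \<in> A" for t
    using that assms unfolding A_def by auto
  have holo: "(\<lambda>t. t * Psi t) holomorphic_on A"
    unfolding Psi_def PN_def using nzm nzn by (intro holomorphic_intros) auto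
  have r: "residue (FF m n j) z = (deriv ^^ 1) (\<lambda>t. t * Psi t) z / fact 1"
    unfolding FFeq by (rule residue_holomorphic_over_power[OF oA zA holo])
  define a1 where "a1 = (\<Sum>i\<in>{1..m}-{j}. 1/(z + of_nat i))"
  define a2 where "a2 = (\<Sum>i\<in>{1..n}. 1/(z + of_nat i))"
  define b1 where "b1 = (\<Sum>i\<in>{0..m}-{k}. 1/(z - of_nat i))"
  define b2 where "b2 = (\<Sum>i\<in>{0..n}-{k}. 1/(z - of_nat i))"
  have pz: "z + of_nat i \<noteq> 0" if "i \<ge> 1" for i
  proof -
    have "z + of_nat i = of_nat (k + i)" unfolding z_def by simp
    moreover have "(of_nat (k + i) :: complex) \<noteq> 0" using that by (simp del: of_nat_add)
    ultimately show ?thesis by simp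
  qed
  have mz: "z - of_nat i \<noteq> 0" if "i \<noteq> k" for i
    using that unfolding z_def by simp
  have d1: "((\<lambda>t. PN m n j t) has_field_derivative PN m n j z * (a1 + a2)) (at z)"
    unfolding PN_def a1_def a2_def
    by (intro ld_mult ld_prod_plus) (auto intro!: pz)
  have d2: "((\<lambda>t. (\<Prod>i\<in>{0..m}-{k}. (t - of_nat i)) * (\<Prod>i\<in>{0..n}-{k}. (t - of_nat i)))
      has_field_derivative ((\<Prod>i\<in>{0..m}-{k}. (z - of_nat i)) * (\<Prod>i\<in>{0..n}-{k}. (z - of_nat i))) * (b1 + b2)) (at z)"
    unfolding b1_def b2_def
    by (intro ld_mult ld_prod_minus) (auto simp: z_def)
  have d3: "(Psi has_field_derivative Psi z * ((a1 + a2) - (b1 + b2))) (at z)"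
    unfolding Psi_def using ld_div[OF d1 d2] nzm nzn zA by simp
  have d4: "((\<lambda>t. t * Psi t) has_field_derivative Psi z * (1 + z * ((a1 + a2) - (b1 + b2)))) (at z)"
    using DERIV_mult[OF DERIV_ident d3] by (simp add: algebra_simps)
  show ?thesis using r DERIV_imp_deriv[OF d4] unfolding a1_def a2_def b1_def b2_def by simp
qed

lemma res_high_raw:
  assumes "n < k" "k \<le> m"
  defines "z \<equiv> (of_nat k :: complex)"
  shows "residue (FF m n j) z = z * PN m n j z / ((\<Prod>i\<in>{0..m}-{k}. (z - of_nat i)) * (\<Prod>i\<in>{0..n}. (z - of_nat i)))"
proof -
  define Psi where "Psi = (\<lambda>t. PN m n j t / ((\<Prod>i\<in>{0..m}-{k}. (t - of_nat i)) * (\<Prod>i\<in>{0..n}. (t - of_nat i))))"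
  have km: "k \<in> {0..m}" using assms by auto
  have FFeq: "FF m n j = (\<lambda>t. (t * Psi t) / (t - z) ^ Suc 0)"
  proof
    fix t
    have "(\<Prod>i\<in>{0..m}. (t - of_nat i)) = (t - z) * (\<Prod>i\<in>{0..m}-{k}. (t - of_nat i))"
      using prod.remove[OF _ km(1), of "\<lambda>i. t - of_nat i"] unfolding z_def by simp
    then show "FF m n j t = (t * Psi t) / (t - z) ^ Suc 0"
      unfolding FF_def Psi_def by (simp add: mult_ac)
  qed
  define A where "A = UNIV - (of_nat ` ({0..m}-{k}) :: complex set)"
  have oA: "open A" unfolding A_def by (intro open_Diff finite_imp_closed) auto
  have zA: "z \<in> A" unfolding A_def z_def by (auto simp: inj_on_def)
  have nzm: "(\<Prod>i\<in>{0..m}-{k}. (t - of_nat i)) \<noteq> 0" if "t \<in> A" for t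
    using that unfolding A_def by auto
  have nzn: "(\<Prod>i\<in>{0..n}. (t - of_nat i)) \<noteq> 0" if "t \<in> A" for t
    using that assms unfolding A_def by auto
  have holo: "(\<lambda>t. t * Psi t) holomorphic_on A"
    unfolding Psi_def PN_def using nzm nzn by (intro holomorphic_intros) auto
  have r: "residue (FF m n j) z = (deriv ^^ 0) (\<lambda>t. t * Psi t) z / fact 0"
    unfolding FFeq by (rule residue_holomorphic_over_power[OF oA zA holo])
  thus ?thesis unfolding Psi_def by simp
qed

lemma PN_val:
  assumes "1 \<le> j" "j \<le> m"
  shows "PN m n j (of_nat k) = (fact (m+k) / fact k) / (of_nat k + of_nat j) * (fact (n+k) / fact k)"
proof -
  have jm: "j \<in> {1..m}" using assms by auto
  have nz: "(of_nat k + of_nat j :: complex) \<noteq> 0" by (rule nzkj) (use assms in simp)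
  have e: "(\<Prod>i\<in>{1..m}. (of_nat k + of_nat i :: complex)) = (of_nat k + of_nat j) * (\<Prod>i\<in>{1..m}-{j}. (of_nat k + of_nat i))"
    by (rule prod.remove[OF _ jm]) simp
  have "(\<Prod>i\<in>{1..m}-{j}. (of_nat k + of_nat i :: complex)) = (\<Prod>i\<in>{1..m}. (of_nat k + of_nat i :: complex)) / (of_nat k + of_nat j)"
    unfolding e using nz by simp
  hence "(\<Prod>i\<in>{1..m}-{j}. (of_nat k + of_nat i :: complex)) = (fact (m+k) / fact k) / (of_nat k + of_nat j)"
    by (simp only: P1)
  thus ?thesis unfolding PN_def P1 by simp
qed

lemma A1_val:
  assumes "1 \<le> j" "j \<le> m"
  shows "(\<Sum>i\<in>{1..m}-{j}. 1 / (of_nat k + of_nat i :: complex)) = hs (m+k) - hs k - 1 / (of_nat k + of_nat j)"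
proof -
  have jm: "j \<in> {1..m}" using assms by auto
  have e: "(\<Sum>i\<in>{1..m}. 1 / (of_nat k + of_nat i :: complex)) = 1 / (of_nat k + of_nat j) + (\<Sum>i\<in>{1..m}-{j}. 1 / (of_nat k + of_nat i))"
    by (rule sum.remove[OF _ jm]) simp
  have "(\<Sum>i\<in>{1..m}-{j}. 1 / (of_nat k + of_nat i :: complex)) = (\<Sum>i\<in>{1..m}. 1 / (of_nat k + of_nat i :: complex)) - 1 / (of_nat k + of_nat j)"
    unfolding e by simp
  thus ?thesis by (simp only: S1)
qed

lemma res_low:
  assumes "k \<le> n" "n \<le> m" "1 \<le> j" "j \<le> m"
  shows "residue (FF m n j) (of_nat k) = (-1)^(m+n) * (of_nat ((m + k) choose k) * of_nat (m choose k)
              * of_nat ((n + k) choose k) * of_nat (n choose k)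
           * ((1 + of_nat k * (hs (m + k) + hs (m - k) + hs (n + k) + hs (n - k) - 4 * hs k)) / (of_nat k + of_nat j)
              - of_nat k / (of_nat k + of_nat j)^2))"
proof -
  note r = res_low_raw[OF assms]
  have nz: "(of_nat k + of_nat j :: complex) \<noteq> 0" by (rule nzkj) (use assms in simp)
  have km: "k \<le> m" using assms by simp
  have pm: "(\<Prod>i\<in>{0..m}-{k}. (of_nat k - of_nat i :: complex)) = (-1)^(m-k) * fact k * fact (m-k)"
    by (rule P2[OF km])
  have pn: "(\<Prod>i\<in>{0..n}-{k}. (of_nat k - of_nat i :: complex)) = (-1)^(n-k) * fact k * fact (n-k)"
    by (rule P2[OF assms(1)])
  have sm: "(\<Sum>i\<in>{0..m}-{k}. 1 / (of_nat k - of_nat i :: complex)) = hs k - hs (m-k)"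
    by (rule S2[OF km])
  have sn: "(\<Sum>i\<in>{0..n}-{k}. 1 / (of_nat k - of_nat i :: complex)) = hs k - hs (n-k)"
    by (rule S2[OF assms(1)])
  have b: "of_nat ((m + k) choose k) * of_nat (m choose k) * of_nat ((n + k) choose k) * of_nat (n choose k)
     = (fact (m+k) / (fact k * fact m)) * (fact m / (fact k * fact (m-k))) * (fact (n+k) / (fact k * fact n))
       * (fact n / (fact k * fact (n-k)) :: complex)"
    using km assms(1) by (simp add: binomial_fact)
  have sg: "((-1::complex)^(m-k) * (-1)^(n-k)) = (-1)^(m+n)" by (rule sign_aux[OF assms(1,2)])
  have sg2: "((-1::complex)^(m+n)) * (-1)^(m+n) = 1" by (simp flip: power_add)
  define S where "S = ((-1::complex)^(m+n))"
  define Bp where "Bp = (fact (m+k) * fact (n+k)) / (fact k ^ 4 * fact (m-k) * fact (n-k) :: complex)"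
  define w where "w = (of_nat k + of_nat j :: complex)"
  define L0 where "L0 = (hs (m + k) + hs (m - k) + hs (n + k) + hs (n - k) - 4 * hs k :: complex)"
  have bB: "(fact (m+k) / (fact k * fact m)) * (fact m / (fact k * fact (m-k))) * (fact (n+k) / (fact k * fact n))
       * (fact n / (fact k * fact (n-k)) :: complex) = Bp"
    unfolding Bp_def by (simp add: field_simps power4_eq_xxxx)
  have iS: "1 / ((-1::complex)^(m-k) * (-1)^(n-k)) = S" unfolding sg S_def using sg2 by (simp add: field_simps)
  have G1: "(fact (m+k) / fact k) / w * (fact (n+k) / fact k) /
      (((-1)^(m-k) * fact k * fact (m-k)) * ((-1)^(n-k) * fact k * fact (n-k))) = S * Bp / w"
  proof -
    have "(fact (m+k) / fact k) / w * (fact (n+k) / fact k) /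
      (((-1)^(m-k) * fact k * fact (m-k)) * ((-1)^(n-k) * fact k * fact (n-k)))
      = (1 / ((-1::complex)^(m-k) * (-1)^(n-k))) * Bp / w"
      unfolding Bp_def by (simp add: field_simps power4_eq_xxxx)
    thus ?thesis unfolding iS .
  qed
  have G2: "1 + of_nat k * ((hs (m + k) - hs k - 1 / w + (hs (n + k) - hs k)) - ((hs k - hs (m - k)) + (hs k - hs (n - k))))
       = (1 + of_nat k * L0) - of_nat k / w"
    unfolding L0_def by (simp add: algebra_simps)
  have G3: "S * Bp / w * ((1 + of_nat k * L0) - of_nat k / w) = S * (Bp * ((1 + of_nat k * L0) / w - of_nat k / w^2))"
    using nz unfolding w_def[symmetric] by (simp add: field_simps power2_eq_square)
  show ?thesis
    unfolding r PN_val[OF assms(3,4)] A1_val[OF assms(3,4)] pm pn sm sn b bB S1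
    unfolding w_def[symmetric] L0_def[symmetric] S_def[symmetric] G1 G2 G3 ..
qed

lemma sign_aux2: "n < k \<Longrightarrow> k \<le> m \<Longrightarrow> ((-1::complex)^(m-k) * ((-1)^(m+n) * (-1)^(k-n))) = 1"
proof -
  assume a: "n < k" "k \<le> m"
  have e: "(m - k) + ((m + n) + (k - n)) = 2*m" using a by simp
  have "((-1::complex)^(m-k) * ((-1)^(m+n) * (-1)^(k-n))) = (-1)^((m - k) + ((m + n) + (k - n)))"
    by (simp only: power_add)
  also have "\<dots> = ((-1)^2)^m" unfolding e power_mult ..
  finally show ?thesis by simp
qed

lemma res_high:
  assumes "n < k" "k \<le> m" "1 \<le> j" "j \<le> m"
  shows "residue (FF m n j) (of_nat k) = (-1)^(m+n) * ((-1) ^ (k - n) * of_nat ((m + k) choose k) * of_nat (m choose k)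
              * of_nat ((n + k) choose k) / of_nat ((k - 1) choose n) * (1 / (of_nat k + of_nat j)))"
proof -
  note r = res_high_raw[OF assms(1,2), of j]
  have nz: "(of_nat k + of_nat j :: complex) \<noteq> 0" by (rule nzkj) (use assms in simp)
  have pm: "(\<Prod>i\<in>{0..m}-{k}. (of_nat k - of_nat i :: complex)) = (-1)^(m-k) * fact k * fact (m-k)"
    by (rule P2[OF assms(2)])
  have pn: "(\<Prod>i\<in>{0..n}. (of_nat k - of_nat i :: complex)) = fact k / fact (k - n - 1)"
    by (rule P3[OF assms(1)])
  obtain d where d: "k = Suc d" using assms by (cases k) auto
  have dn: "n \<le> d" using assms d by simp
  have fk: "(fact k :: complex) = of_nat k * fact d" unfolding d by simp
  have kd: "k - 1 = d" "k - n - 1 = d - n" using d by auto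
  have b: "of_nat ((m + k) choose k) * of_nat (m choose k) * of_nat ((n + k) choose k) / of_nat ((k - 1) choose n)
     = (fact (m+k) / (fact k * fact m)) * (fact m / (fact k * fact (m-k))) * (fact (n+k) / (fact k * fact n))
       / (fact d / (fact n * fact (d - n)) :: complex)"
    unfolding kd using assms dn by (simp add: binomial_fact)
  define S where "S = ((-1::complex)^(m+n)) * (-1)^(k-n)"
  have sS: "(-1::complex)^(m-k) * S = 1" unfolding S_def by (rule sign_aux2[OF assms(1,2)])
  have kz: "(of_nat k :: complex) \<noteq> 0" using assms by simp
  define w where "w = (of_nat k + of_nat j :: complex)"
  have "residue (FF m n j) (of_nat k) = of_nat k * ((fact (m+k) / fact k) / w * (fact (n+k) / fact k))
      / (((-1)^(m-k) * fact k * fact (m-k)) * (fact k / fact (d - n)))"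
    unfolding r PN_val[OF assms(3,4)] pm pn kd w_def ..
  also have "\<dots> = S * ((fact (m+k) / (fact k * fact m)) * (fact m / (fact k * fact (m-k))) * (fact (n+k) / (fact k * fact n))
       / (fact d / (fact n * fact (d - n))) * (1 / w))"
  proof -
    have sY: "S * Y = Y / (-1::complex)^(m-k)" for Y
    proof -
      have "Y / (-1::complex)^(m-k) = (S * (-1)^(m-k)) * Y / (-1)^(m-k)" using sS by (simp add: mult.commute)
      also have "\<dots> = S * Y" by simp
      finally show ?thesis ..
    qed
    show ?thesis unfolding sY unfolding fk using kz by (simp add: field_simps)
  qed
  finally have "residue (FF m n j) (of_nat k) = S * ((fact (m+k) / (fact k * fact m)) * (fact m / (fact k * fact (m-k))) * (fact (n+k) / (fact k * fact n))
       / (fact d / (fact n * fact (d - n))) * (1 / w))" .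
  thus ?thesis unfolding b[symmetric] S_def w_def by (simp add: mult.assoc)
qed



lemma core_c:
  assumes "n \<le> m" "1 \<le> j" "j \<le> m"
  shows "(\<Sum>k = 0..n. of_nat ((m + k) choose k) * of_nat (m choose k)
              * of_nat ((n + k) choose k) * of_nat (n choose k)
           * ((1 + of_nat k * (hs (m + k) + hs (m - k) + hs (n + k) + hs (n - k) - 4 * hs k)) / (of_nat k + of_nat j)
              - of_nat k / (of_nat k + of_nat j)^2))
       + (\<Sum>k = n + 1..m. (-1) ^ (k - n) * of_nat ((m + k) choose k) * of_nat (m choose k)
              * of_nat ((n + k) choose k) / of_nat ((k - 1) choose n) * (1 / (of_nat k + of_nat j))) = (0::complex)"
    (is "?A + ?B = 0")
proof -
  have split: "(\<Sum>k=0..m. residue (FF m n j) (of_nat k)) = (\<Sum>k=0..n. residue (FF m n j) (of_nat k)) + (\<Sum>k=n+1..m. residue (FF m n j) (of_nat k))"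
    using sum.ub_add_nat[of 0 n "\<lambda>k. residue (FF m n j) (of_nat k)" "m - n"] assms by simp
  have lo: "(\<Sum>k=0..n. residue (FF m n j) (of_nat k)) = (-1)^(m+n) * ?A"
    unfolding sum_distrib_left by (intro sum.cong refl res_low) (use assms in auto)
  have hi: "(\<Sum>k=n+1..m. residue (FF m n j) (of_nat k)) = (-1)^(m+n) * ?B"
    unfolding sum_distrib_left by (intro sum.cong refl res_high) (use assms in auto)
  have "(-1)^(m+n) * (?A + ?B) = 0" using FF_sum_res[OF assms(2,3,1)] unfolding split lo hi
    by (simp add: distrib_left)
  thus ?thesis by simp
qed



lemma of_rat_gharm1: "(of_rat (gharm (Suc 0) x) :: complex) = hs x"
  unfolding gharm_def hs_def by (simp add: of_rat_sum of_rat_divide)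

lemma core_q:
  assumes "n \<le> m" "1 \<le> j" "j \<le> m"
  shows "(\<Sum>k = 0..n. of_nat ((m + k) choose k) * of_nat (m choose k)
              * of_nat ((n + k) choose k) * of_nat (n choose k)
           * ((1 + of_nat k * (gharm 1 (m + k) + gharm 1 (m - k) + gharm 1 (n + k) + gharm 1 (n - k) - 4 * gharm 1 k)) / (of_nat k + of_nat j)
              - of_nat k / (of_nat k + of_nat j)^2))
       + (\<Sum>k = n + 1..m. (-1) ^ (k - n) * of_nat ((m + k) choose k) * of_nat (m choose k)
              * of_nat ((n + k) choose k) / of_nat ((k - 1) choose n) * (1 / (of_nat k + of_nat j))) = (0::rat)"
    (is "?X = 0")
proof -
  have "(of_rat ?X :: complex) = 0"
    using core_c[OF assms]
    by (simp add: of_rat_add of_rat_sum of_rat_mult of_rat_divide of_rat_diff of_rat_power of_rat_gharm1)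
  thus ?thesis by simp
qed

lemma gharm_diff:
  assumes "1 \<le> a" "a \<le> b + 1"
  shows "gharm r (k + b) - gharm r (k + a - 1) = (\<Sum>j=a..b. 1 / (of_nat k + of_nat j) ^ r)"
proof -
  have "gharm r (k + b) = (\<Sum>i=1..(k + a - 1) + (b + 1 - a). 1 / (of_nat i) ^ r)"
    unfolding gharm_def using assms by (intro sum.cong refl) simp_all
  also have "\<dots> = gharm r (k + a - 1) + (\<Sum>i=(k + a - 1) + 1..(k + a - 1) + (b + 1 - a). 1 / (of_nat i) ^ r)"
    unfolding gharm_def by (rule sum.ub_add_nat) simp
  also have "(\<Sum>i=(k + a - 1) + 1..(k + a - 1) + (b + 1 - a). 1 / (of_nat i :: rat) ^ r) = (\<Sum>i=a + k..b + k. 1 / (of_nat i) ^ r)"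
    using assms by (intro sum.cong refl) auto
  also have "\<dots> = (\<Sum>j=a..b. 1 / (of_nat k + of_nat j) ^ r)"
    unfolding sum.shift_bounds_cl_nat_ivl by (simp add: add.commute)
  finally show ?thesis by simp
qed



theorem theorem1p3:
  fixes l m n :: nat and c1 c2 :: rat
  assumes "0 < n" and "m < l" and "n \<le> m" and "l \<le> 2 * n"
  shows "(\<Sum>k = 0..n. of_nat ((m + k) choose k) * of_nat (m choose k)
              * of_nat ((n + k) choose k) * of_nat (n choose k)
           * ((1 + of_nat k * (gharm 1 (m + k) + gharm 1 (m - k) + gharm 1 (n + k)
                 + gharm 1 (n - k) - 4 * gharm 1 k)) * Uk c1 c2 l m n 1 k
              - of_nat k * Uk c1 c2 l m n 2 k))
       + (\<Sum>k = n + 1..m. (-1) ^ (k - n) * of_nat ((m + k) choose k) * of_nat (m choose k)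
              * of_nat ((n + k) choose k) / of_nat ((k - 1) choose n) * Uk c1 c2 l m n 1 k)
       = 0"
proof -
  define J1 where "J1 = {l-n..n}"
  define J2 where "J2 = {l-m..m}"
  define B where "B = (\<lambda>k. of_nat ((m + k) choose k) * of_nat (m choose k)
              * of_nat ((n + k) choose k) * of_nat (n choose k) :: rat)"
  define L where "L = (\<lambda>k. gharm 1 (m + k) + gharm 1 (m - k) + gharm 1 (n + k) + gharm 1 (n - k) - 4 * gharm 1 k)"
  define C where "C = (\<lambda>k. (-1) ^ (k - n) * of_nat ((m + k) choose k) * of_nat (m choose k)
              * of_nat ((n + k) choose k) / of_nat ((k - 1) choose n) :: rat)"
  define X where "X = (\<lambda>k j. B k * ((1 + of_nat k * L k) / (of_nat k + of_nat j) - of_nat k / (of_nat k + of_nat j)^2))"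
  define Y where "Y = (\<lambda>k j. C k * (1 / (of_nat k + of_nat j :: rat)))"
  have T0: "(\<Sum>k=0..n. X k j) + (\<Sum>k=n+1..m. Y k j) = 0" if "1 \<le> j" "j \<le> m" for j
    unfolding X_def Y_def B_def C_def L_def using core_q[OF assms(3) that] .
  have e1: "k + l - n - 1 = k + (l - n) - 1" for k using assms by simp
  have e2: "k + l - m - 1 = k + (l - m) - 1" for k using assms by simp
  have U: "Uk c1 c2 l m n r k = c1 * (\<Sum>j\<in>J1. 1 / (of_nat k + of_nat j) ^ r) + c2 * (\<Sum>j\<in>J2. 1 / (of_nat k + of_nat j) ^ r)" for r k
    unfolding Uk_def J1_def J2_def e1 e2 using assms by (subst gharm_diff, simp, simp)+ simp
  have low: "B k * ((1 + of_nat k * L k) * Uk c1 c2 l m n 1 k - of_nat k * Uk c1 c2 l m n 2 k)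
     = c1 * (\<Sum>j\<in>J1. X k j) + c2 * (\<Sum>j\<in>J2. X k j)" for k
    unfolding U X_def by (simp add: sum_distrib_left sum_subtractf algebra_simps divide_inverse)
  have high: "C k * Uk c1 c2 l m n 1 k = c1 * (\<Sum>j\<in>J1. Y k j) + c2 * (\<Sum>j\<in>J2. Y k j)" for k
    unfolding U Y_def by (simp add: sum_distrib_left algebra_simps divide_inverse)
  have "?thesis \<longleftrightarrow> (\<Sum>k=0..n. c1 * (\<Sum>j\<in>J1. X k j) + c2 * (\<Sum>j\<in>J2. X k j))
        + (\<Sum>k=n+1..m. c1 * (\<Sum>j\<in>J1. Y k j) + c2 * (\<Sum>j\<in>J2. Y k j)) = 0"
    unfolding low[symmetric] high[symmetric] B_def L_def C_def by (simp add: mult.assoc)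
  also have "(\<Sum>k=0..n. c1 * (\<Sum>j\<in>J1. X k j) + c2 * (\<Sum>j\<in>J2. X k j))
        + (\<Sum>k=n+1..m. c1 * (\<Sum>j\<in>J1. Y k j) + c2 * (\<Sum>j\<in>J2. Y k j))
     = c1 * (\<Sum>j\<in>J1. (\<Sum>k=0..n. X k j) + (\<Sum>k=n+1..m. Y k j))
       + c2 * (\<Sum>j\<in>J2. (\<Sum>k=0..n. X k j) + (\<Sum>k=n+1..m. Y k j))"
    by (simp add: sum.distrib sum_distrib_left algebra_simps sum.swap[of _ J1] sum.swap[of _ J2])
  also have "(\<Sum>j\<in>J1. (\<Sum>k=0..n. X k j) + (\<Sum>k=n+1..m. Y k j)) = 0"
    by (intro sum.neutral ballI T0) (use assms in \<open>auto simp: J1_def\<close>)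
  also have "(\<Sum>j\<in>J2. (\<Sum>k=0..n. X k j) + (\<Sum>k=n+1..m. Y k j)) = 0"
    by (intro sum.neutral ballI T0) (use assms in \<open>auto simp: J2_def\<close>)
  finally show ?thesis by simp
qed


end
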